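(* Any solution $(\phi^{n+1},\mu^{n+1})\in\Phi_h\times M_h$ of the G$_\varepsilon$-scheme satisfies $$\int_\Omega\phi^{n+1}\,d\boldsymbol x=\int_\Omega\phi^n\,d\boldsymbol x$$ and $$\delta_tE_h(\phi^{n+1})+\int_\Omega\Big|\sqrt{M^G_\varepsilon(\phi^{n+1})}\,\nabla\mu^{n+1}\Big|^2d\boldsymbol x\le0,$$ where $E_h(\phi)=\int_\Omega\frac12|\nabla\phi|^2\,d\boldsymbol x+\int_\Omega I_h(F(\phi))\,d\boldsymbol x$.
   Context: $\Omega\subset\mathbb{R}^d$ ($d=1,2,3$) bounded, $\eta>0$, $\varepsilon\in(0,1/2)$. $F(\phi)=\frac1{4\eta^2}\phi^2(\phi-1)^2=F_c(\phi)+F_e(\phi)$ with $F_c(\phi)=\frac1{4\eta^2}(\phi^4-2\phi^3+\frac32\phi^2)$ and $F_e(\phi)=-\frac1{8\eta^2}\phi^2$. Time step $\Delta t=T/N$, $\delta_tf^{n+1}=(f^{n+1}-f^n)/\Delta t$. $\mathcal T_h$ is a structured triangulation of $\Omega$ (element size $\le h$) in which every element $I$ has vertices $\boldsymbol x_0,\boldsymbol x_1,\dots,\boldsymbol x_d$ with $\boldsymbol x_k-\boldsymbol x_0$ parallel to the $k$-th coordinate axis. $\Phi_h$ is the space of continuous piecewise $\mathbb{P}_1$ functions and $M_h$ the space of continuous piecewise $\mathbb{P}_k$ functions ($k\ge1$). $I_h$ is nodal $\mathbb{P}_1$ interpolation, $(f,g)_h=\int_\Omega I_h(fg)\,d\boldsymbol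 x$ (mass lumping), and $(\cdot,\cdot)$ is the $L^2(\Omega)$ product. Let $G(\phi)=\phi\ln\phi+(1-\phi)\ln(1-\phi)+1$, and $G_\varepsilon\in C^2(\mathbb{R})$ equal to $G$ on $[\varepsilon,1-\varepsilon]$ and to its second-order Taylor polynomial at $\varepsilon$ (resp. $1-\varepsilon$) for $\phi<\varepsilon$ (resp. $\phi>1-\varepsilon$); thus $G_\varepsilon''=1/M_\varepsilon$ where $M_\varepsilon(\phi)=\phi(1-\phi)$ truncated to $\varepsilon(1-\varepsilon)$ outside $[\varepsilon,1-\varepsilon]$. For $\phi\in\Phi_h$, $M^G_\varepsilon(\phi)$ is the piecewise constant diagonal matrix whose $k$-th diagonal entry on element $I$ is $\frac{\phi(\boldsymbol x_k)-\phi(\boldsymbol x_0)}{G_\varepsilon'(\phi(\boldsymbol x_k))-G_\varepsilon'(\phi(\boldsymbol x_0))}$ if $\phi(\boldsymbol x_k)\ne\phi(\boldsymbol x_0)$ and $1/G_\varepsilon''(\phi(\boldsymbol x_0))$ otherwise (these entries are $\ge0$). The G$_\varepsilon$-scheme: given $\phi^n\in\Phi_h$, find $(\phi^{n+1},\mu^{n+1})\in\Phi_h\times M_h$ with, for all $(\bar\phi,\bar\mu)\in\Phi_h\times M_h$, $\frac1{\Delta t}(\phi^{n+1}-\phi^n,\bar\mu)_h+(M^G_\varepsilon(\phi^{n+1})\nabla\mu^{n+1},\nabla\bar\mu)=0$ and $(\nabla\phi^{n+1},\nabla\bar\phi)+(I_h(F_c'(\phi^{n+1}))+I_h(F_e'(\phi^n)),\bar\phi)_h=(\mu^{n+1},\bar\phi)_h$.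 *)

theory Defs
  imports "HOL-Analysis.Analysis"
begin

definition F :: "real \<Rightarrow> real \<Rightarrow> real" where
  "F \<eta> \<phi> = (1 / (4 * \<eta>^2)) * \<phi>^2 * (\<phi> - 1)^2"

definition Fc :: "real \<Rightarrow> real \<Rightarrow> real" where
  "Fc \<eta> \<phi> = (1 / (4 * \<eta>^2)) * (\<phi>^4 - 2 * \<phi>^3 + (3/2) * \<phi>^2)"

definition Fe :: "real \<Rightarrow> real \<Rightarrow> real" where
  "Fe \<eta> \<phi> = - (1 / (8 * \<eta>^2)) * \<phi>^2"

definition G :: "real \<Rightarrow> real" where
  "G \<phi> = \<phi> * ln \<phi> + (1 - \<phi>) * ln (1 - \<phi>) + 1"

definition G1 :: "real \<Rightarrow> real" where
  "G1 \<phi> = ln \<phi> - ln (1 - \<phi>)"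

definition G2 :: "real \<Rightarrow> real" where
  "G2 \<phi> = 1 / (\<phi> * (1 - \<phi>))"

text \<open>G_eps: equal to G on [eps, 1-eps], second-order Taylor polynomial at eps
  (resp. 1-eps) below eps (resp. above 1-eps).\<close>
definition G_eps :: "real \<Rightarrow> real \<Rightarrow> real" where
  "G_eps \<epsilon> \<phi> =
     (if \<phi> < \<epsilon> then G \<epsilon> + G1 \<epsilon> * (\<phi> - \<epsilon>) + G2 \<epsilon> / 2 * (\<phi> - \<epsilon>)^2
      else if \<phi> > 1 - \<epsilon> then
        G (1 - \<epsilon>) + G1 (1 - \<epsilon>) * (\<phi> - (1 - \<epsilon>)) + G2 (1 - \<epsilon>) / 2 * (\<phi> - (1 - \<epsilon>))^2
      else G \<phi>)"

text \<open>An element is a pair (x0, hs): its vertices are x0 and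
  x_i = x0 + hs$i * e_i for each coordinate axis i (hs$i \<noteq> 0).\<close>
type_synonym 'd elem = "(real^'d) \<times> (real^'d)"

definition vtx :: "'d::finite elem \<Rightarrow> 'd \<Rightarrow> real^'d" where
  "vtx I i = fst I + (snd I $ i) *\<^sub>R axis i 1"

definition verts :: "'d::finite elem \<Rightarrow> (real^'d) set" where
  "verts I = insert (fst I) (range (vtx I))"

definition elem_set :: "'d::finite elem \<Rightarrow> (real^'d) set" where
  "elem_set I = convex hull (verts I)"

definition struct_mesh :: "'d::finite elem set \<Rightarrow> (real^'d) set \<Rightarrow> real \<Rightarrow> bool" where
  "struct_mesh T \<Omega> h \<longleftrightarrow>
     finite T \<and> T \<noteq> {} \<and>
     (\<forall>I\<in>T. \<forall>i. snd I $ i \<noteq> 0) \<and>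
     (\<forall>I\<in>T. diameter (elem_set I) \<le> h) \<and>
     \<Omega> = (\<Union>I\<in>T. elem_set I) \<and>
     (\<forall>I\<in>T. \<forall>J\<in>T. I \<noteq> J \<longrightarrow>
         interior (elem_set I) \<inter> interior (elem_set J) = {} \<and>
         elem_set I \<inter> elem_set J = convex hull (verts I \<inter> verts J))"

text \<open>The element of T containing x (arbitrary choice on inter-element boundaries,
  which are Lebesgue-null).\<close>
definition elem_of :: "'d::finite elem set \<Rightarrow> real^'d \<Rightarrow> 'd elem" where
  "elem_of T x = (SOME I. I \<in> T \<and> x \<in> elem_set I)"

text \<open>Nodal P1 interpolant on one element (barycentric coordinates of an
  axis-aligned simplex are (x - x0)$i / hs$i).\<close>
definition interp_elem :: "'d::finite elem \<Rightarrow> (real^'d \<Rightarrow> real) \<Rightarrow> real^'d \<Rightarrow> real" where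
  "interp_elem I w x =
     w (fst I) + (\<Sum>i\<in>UNIV. (w (vtx I i) - w (fst I)) * ((x - fst I) $ i) / (snd I $ i))"

definition Ih :: "'d::finite elem set \<Rightarrow> (real^'d \<Rightarrow> real) \<Rightarrow> real^'d \<Rightarrow> real" where
  "Ih T w x = interp_elem (elem_of T x) w x"

definition lumped :: "'d::finite elem set \<Rightarrow> (real^'d) set \<Rightarrow> (real^'d \<Rightarrow> real) \<Rightarrow> (real^'d \<Rightarrow> real) \<Rightarrow> real" where
  "lumped T \<Omega> f g = integral \<Omega> (Ih T (\<lambda>x. f x * g x))"

definition Phi_h :: "'d::finite elem set \<Rightarrow> (real^'d) set \<Rightarrow> (real^'d \<Rightarrow> real) set" where
  "Phi_h T \<Omega> = {f. continuous_on \<Omega> f \<and>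
      (\<forall>I\<in>T. \<exists>a (b::real^'d). \<forall>x\<in>elem_set I. f x = a + b \<bullet> x)}"

definition poly_deg_le :: "nat \<Rightarrow> (real^'d::finite \<Rightarrow> real) \<Rightarrow> (real^'d) set \<Rightarrow> bool" where
  "poly_deg_le k f S \<longleftrightarrow>
     (\<exists>(A :: ('d \<Rightarrow> nat) set) c. finite A \<and> (\<forall>\<alpha>\<in>A. (\<Sum>i\<in>UNIV. \<alpha> i) \<le> k) \<and>
        (\<forall>x\<in>S. f x = (\<Sum>\<alpha>\<in>A. c \<alpha> * (\<Prod>i\<in>UNIV. (x $ i) ^ (\<alpha> i)))))"

definition M_h :: "'d::finite elem set \<Rightarrow> (real^'d) set \<Rightarrow> nat \<Rightarrow> (real^'d \<Rightarrow> real) set" where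
  "M_h T \<Omega> k = {f. continuous_on \<Omega> f \<and> (\<forall>I\<in>T. poly_deg_le k f (elem_set I))}"

definition grad :: "(real^'d::finite \<Rightarrow> real) \<Rightarrow> real^'d \<Rightarrow> real^'d" where
  "grad f x = (\<chi> i. frechet_derivative f (at x) (axis i 1))"

definition diag_mat :: "real^'d::finite \<Rightarrow> real^'d^'d" where
  "diag_mat v = (\<chi> i j. if i = j then v $ i else 0)"

definition MG_entry :: "real \<Rightarrow> (real^'d::finite \<Rightarrow> real) \<Rightarrow> 'd elem \<Rightarrow> 'd \<Rightarrow> real" where
  "MG_entry \<epsilon> \<phi> I i =
     (let a = \<phi> (fst I); b = \<phi> (vtx I i) in
      if b \<noteq> a then (b - a) / (deriv (G_eps \<epsilon>) b - deriv (G_eps \<epsilon>) a)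
      else 1 / deriv (deriv (G_eps \<epsilon>)) a)"

definition MG :: "'d::finite elem set \<Rightarrow> real \<Rightarrow> (real^'d \<Rightarrow> real) \<Rightarrow> real^'d \<Rightarrow> real^'d^'d" where
  "MG T \<epsilon> \<phi> x = diag_mat (\<chi> i. MG_entry \<epsilon> \<phi> (elem_of T x) i)"

definition sqrtMG :: "'d::finite elem set \<Rightarrow> real \<Rightarrow> (real^'d \<Rightarrow> real) \<Rightarrow> real^'d \<Rightarrow> real^'d^'d" where
  "sqrtMG T \<epsilon> \<phi> x = diag_mat (\<chi> i. sqrt (MG_entry \<epsilon> \<phi> (elem_of T x) i))"

definition Eh :: "'d::finite elem set \<Rightarrow> (real^'d) set \<Rightarrow> real \<Rightarrow> (real^'d \<Rightarrow> real) \<Rightarrow> real" where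
  "Eh T \<Omega> \<eta> \<phi> = integral \<Omega> (\<lambda>x. (1/2) * (norm (grad \<phi> x))^2)
                   + integral \<Omega> (Ih T (\<lambda>x. F \<eta> (\<phi> x)))"

end

theory Submission
  imports Defs
begin

lemma glue_lt:
  fixes f g :: "real \<Rightarrow> real"
  assumes "DERIV f c :> D" "DERIV g c :> D" "f c = g c"
  shows "DERIV (\<lambda>x. if x < c then f x else g x) c :> D"
proof -
  have e: "(\<lambda>x. if x < c then f x else g x) = (\<lambda>x. if x \<in> {..<c} then f x else g x)" by auto
  have cl1: "closure {..<c} = {..c}" by simp
  have cl2: "closure {c..} = {c..}" by simp
  have "((\<lambda>x. if x \<in> {..<c} then f x else g x) has_derivative
        (if c \<in> {..<c} then ((*) D) else ((*) D))) (at c within {..<c} \<union> {c..})"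
    apply (rule has_derivative_If_within_closures[where f'="\<lambda>_. (*) D" and g'="\<lambda>_. (*) D"])
    using assms by (auto simp: cl1 cl2 has_field_derivative_def intro: has_derivative_subset)
  moreover have "{..<c} \<union> {c..} = (UNIV::real set)" by auto
  ultimately show ?thesis unfolding e has_field_derivative_def by (simp add: mult.commute)
qed

lemma glue_gt:
  fixes f g :: "real \<Rightarrow> real"
  assumes "DERIV f c :> D" "DERIV g c :> D" "f c = g c"
  shows "DERIV (\<lambda>x. if x > c then g x else f x) c :> D"
proof -
  have "(\<lambda>x. if x > c then g x else f x) = (\<lambda>x. if x \<in> {..c} then f x else g x)" by auto
  moreover have "((\<lambda>x. if x \<in> {..c} then f x else g x) has_derivative
        (if c \<in> {..c} then ((*) D) else ((*) D))) (at c within {..c} \<union> {c<..})"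
    apply (rule has_derivative_If_within_closures[where f'="\<lambda>_. (*) D" and g'="\<lambda>_. (*) D"])
    using assms by (auto simp: has_field_derivative_def intro: has_derivative_subset)
  moreover have "{..c} \<union> {c<..} = (UNIV::real set)" by auto
  ultimately show ?thesis unfolding has_field_derivative_def by (simp add: mult.commute)
qed

lemma DERIV_G: "0 < x \<Longrightarrow> x < 1 \<Longrightarrow> DERIV G x :> G1 x"
  unfolding G_def G1_def
  by (rule derivative_eq_intros refl | simp)+

lemma DERIV_G1: "0 < x \<Longrightarrow> x < 1 \<Longrightarrow> DERIV G1 x :> G2 x"
  unfolding G1_def G2_def
  by (rule derivative_eq_intros refl | simp)+ (simp add: field_simps)

definition gd :: "real \<Rightarrow> real \<Rightarrow> real" where
  "gd e x = (if x < e then G1 e + G2 e * (x - e)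
     else if x > 1 - e then G1 (1 - e) + G2 (1 - e) * (x - (1 - e)) else G1 x)"

definition gdd :: "real \<Rightarrow> real \<Rightarrow> real" where
  "gdd e x = (if x < e then G2 e else if x > 1 - e then G2 (1 - e) else G2 x)"

lemma gdd_pos: "0 < e \<Longrightarrow> e < 1/2 \<Longrightarrow> gdd e x > 0"
  unfolding gdd_def G2_def by auto

lemma DERIV_G_eps:
  assumes e: "0 < e" "e < 1/2"
  shows "DERIV (G_eps e) x :> gd e x"
proof -
  let ?q1 = "\<lambda>x. G e + G1 e * (x - e) + G2 e / 2 * (x - e)^2"
  let ?q2 = "\<lambda>x. G (1 - e) + G1 (1 - e) * (x - (1 - e)) + G2 (1 - e) / 2 * (x - (1 - e))^2"
  let ?r = "\<lambda>x. if x > 1 - e then ?q2 x else G x"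
  have GE: "G_eps e = (\<lambda>x. if x < e then ?q1 x else ?r x)"
    by (rule ext) (simp add: G_eps_def)
  have dq1: "DERIV ?q1 y :> G1 e + G2 e * (y - e)" for y
    by (rule derivative_eq_intros refl | simp)+
  have dq2: "DERIV ?q2 y :> G1 (1 - e) + G2 (1 - e) * (y - (1 - e))" for y
    by (rule derivative_eq_intros refl | simp)+
  have dr: "DERIV ?r y :> (if y > 1 - e then G1 (1 - e) + G2 (1 - e) * (y - (1 - e)) else G1 y)"
    if "y > 0" for y
  proof (cases "y > 1 - e")
    case True
    have "eventually (\<lambda>z. ?r z = ?q2 z) (nhds y)"
      using eventually_nhds_in_open[of "{1-e<..}" y] True by (auto elim!: eventually_mono)
    then show ?thesis using dq2[of y] True by (subst DERIV_cong_ev[OF refl _ refl]) auto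
  next
    case False
    show ?thesis
    proof (cases "y < 1 - e")
      case True
      have "eventually (\<lambda>z. ?r z = G z) (nhds y)"
        using eventually_nhds_in_open[of "{..<1-e}" y] True by (auto elim!: eventually_mono)
      then show ?thesis using DERIV_G[of y] True that e by (subst DERIV_cong_ev[OF refl _ refl]) auto
    next
      case False
      then have y: "y = 1 - e" using \<open>\<not> y > 1 - e\<close> by auto
      have "DERIV ?r y :> G1 (1 - e)"
        unfolding y
        by (rule glue_gt) (use dq2[of "1-e"] DERIV_G[of "1-e"] e in auto)
      then show ?thesis using y by simp
    qed
  qed
  show ?thesis
  proof (cases "x < e")
    case True
    have "eventually (\<lambda>z. G_eps e z = ?q1 z) (nhds x)"
      using eventually_nhds_in_open[of "{..<e}" x] True by (auto simp: GE elim!: eventually_mono)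
    then show ?thesis using dq1[of x] True by (subst DERIV_cong_ev[OF refl _ refl]) (auto simp: gd_def)
  next
    case False
    show ?thesis
    proof (cases "x > e")
      case True
      have "eventually (\<lambda>z. G_eps e z = ?r z) (nhds x)"
        using eventually_nhds_in_open[of "{e<..}" x] True by (auto simp: GE elim!: eventually_mono)
      then show ?thesis using dr[of x] True e by (subst DERIV_cong_ev[OF refl _ refl]) (auto simp: gd_def)
    next
      case False
      then have x: "x = e" using \<open>\<not> x < e\<close> by auto
      have "DERIV (G_eps e) e :> G1 e"
        unfolding GE
        by (rule glue_lt) (use dq1[of e] dr[of e] e in auto)
      then show ?thesis using x e by (simp add: gd_def)
    qed
  qed
qed


lemma DERIV_gd:
  assumes e: "0 < e" "e < 1/2"
  shows "DERIV (gd e) x :> gdd e x"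
proof -
  let ?q1 = "\<lambda>x. G1 e + G2 e * (x - e)"
  let ?q2 = "\<lambda>x. G1 (1 - e) + G2 (1 - e) * (x - (1 - e))"
  let ?r = "\<lambda>x. if x > 1 - e then ?q2 x else G1 x"
  have GE: "gd e = (\<lambda>x. if x < e then ?q1 x else ?r x)"
    by (rule ext) (simp add: gd_def)
  have dq1: "DERIV ?q1 y :> G2 e" for y
    by (rule derivative_eq_intros refl | simp)+
  have dq2: "DERIV ?q2 y :> G2 (1 - e)" for y
    by (rule derivative_eq_intros refl | simp)+
  have dr: "DERIV ?r y :> (if y > 1 - e then G2 (1 - e) else G2 y)"
    if "y > 0" for y
  proof (cases "y > 1 - e")
    case True
    have "eventually (\<lambda>z. ?r z = ?q2 z) (nhds y)"
      using eventually_nhds_in_open[of "{1-e<..}" y] True by (auto elim!: eventually_mono)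
    then show ?thesis using dq2[of y] True by (subst DERIV_cong_ev[OF refl _ refl]) auto
  next
    case False
    show ?thesis
    proof (cases "y < 1 - e")
      case True
      have "eventually (\<lambda>z. ?r z = G1 z) (nhds y)"
        using eventually_nhds_in_open[of "{..<1-e}" y] True by (auto elim!: eventually_mono)
      then show ?thesis using DERIV_G1[of y] True that e by (subst DERIV_cong_ev[OF refl _ refl]) auto
    next
      case False
      then have y: "y = 1 - e" using \<open>\<not> y > 1 - e\<close> by auto
      have "DERIV ?r y :> G2 (1 - e)"
        unfolding y
        by (rule glue_gt) (use dq2[of "1-e"] DERIV_G1[of "1-e"] e in auto)
      then show ?thesis using y by simp
    qed
  qed
  show ?thesis
  proof (cases "x < e")
    case True
    have "eventually (\<lambda>z. gd e z = ?q1 z) (nhds x)"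
      using eventually_nhds_in_open[of "{..<e}" x] True by (auto simp: GE elim!: eventually_mono)
    then show ?thesis using dq1[of x] True by (subst DERIV_cong_ev[OF refl _ refl]) (auto simp: gdd_def)
  next
    case False
    show ?thesis
    proof (cases "x > e")
      case True
      have "eventually (\<lambda>z. gd e z = ?r z) (nhds x)"
        using eventually_nhds_in_open[of "{e<..}" x] True by (auto simp: GE elim!: eventually_mono)
      then show ?thesis using dr[of x] True e by (subst DERIV_cong_ev[OF refl _ refl]) (auto simp: gdd_def)
    next
      case False
      then have x: "x = e" using \<open>\<not> x < e\<close> by auto
      have "DERIV (gd e) e :> G2 e"
        unfolding GE
        by (rule glue_lt) (use dq1[of e] dr[of e] e in auto)
      then show ?thesis using x e by (simp add: gdd_def)
    qed
  qed
qed

lemma deriv_G_eps: "0 < e \<Longrightarrow> e < 1/2 \<Longrightarrow> deriv (G_eps e) = gd e"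
  by (rule ext) (rule DERIV_imp_deriv[OF DERIV_G_eps])

lemma deriv_gd: "0 < e \<Longrightarrow> e < 1/2 \<Longrightarrow> deriv (gd e) = gdd e"
  by (rule ext) (rule DERIV_imp_deriv[OF DERIV_gd])

lemma gd_strict_mono:
  assumes e: "0 < e" "e < 1/2" and ab: "a < b"
  shows "gd e a < gd e b"
  using ab by (rule DERIV_pos_imp_increasing) (use DERIV_gd[OF e] gdd_pos[OF e] in blast)

lemma MG_entry_nonneg:
  assumes e: "0 < e" "e < 1/2"
  shows "MG_entry e \<phi> I i \<ge> 0"
proof -
  define a b where "a = \<phi> (fst I)" and "b = \<phi> (vtx I i)"
  have "(b - a) / (gd e b - gd e a) \<ge> 0" if "b \<noteq> a"
  proof (cases "a < b")
    case True then show ?thesis using gd_strict_mono[OF e True] by simp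
  next
    case False then have "b < a" using that by simp
    then show ?thesis using gd_strict_mono[OF e \<open>b < a\<close>] by (simp add: divide_nonpos_neg)
  qed
  then show ?thesis
    unfolding MG_entry_def Let_def a_def[symmetric] b_def[symmetric] deriv_G_eps[OF e] deriv_gd[OF e]
    using gdd_pos[OF e, of a] by auto
qed


lemma diag_mat_mult: "(diag_mat m *v v) $ i = m $ i * v $ i"
proof -
  have h: "\<And>j. (if i = j then m $ i else 0) * v $ j = (if i = j then m $ j * v $ j else 0)" by auto
  show ?thesis unfolding diag_mat_def matrix_vector_mult_def by (simp add: h)
qed

lemma sqrt_sq_helper: "y \<ge> 0 \<Longrightarrow> sqrt y * w * (sqrt y * w) = y * w * (w::real)"
  by (simp add: algebra_simps)

lemma MG_quad:
  assumes e: "0 < e" "e < 1/2"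
  shows "(MG T e \<phi> x *v v) \<bullet> v = (norm (sqrtMG T e \<phi> x *v v))^2"
proof -
  have "(norm (sqrtMG T e \<phi> x *v v))^2 = (sqrtMG T e \<phi> x *v v) \<bullet> (sqrtMG T e \<phi> x *v v)"
    by (simp add: power2_norm_eq_inner)
  also have "\<dots> = (\<Sum>i\<in>UNIV. MG_entry e \<phi> (elem_of T x) i * v $ i * v $ i)"
    unfolding inner_vec_def sqrtMG_def diag_mat_mult
    by (intro sum.cong refl) (simp only: vec_lambda_beta inner_real_def sqrt_sq_helper[OF MG_entry_nonneg[OF e]])
  also have "\<dots> = (MG T e \<phi> x *v v) \<bullet> v"
    unfolding inner_vec_def MG_def diag_mat_mult by simp
  finally show ?thesis by simp
qed

lemma deriv_Fc: "deriv (Fc eta) a = (1 / (4 * eta^2)) * (4 * a^3 - 6 * a^2 + 3 * a)"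
proof -
  have "DERIV (Fc eta) a :> (1 / (4 * eta^2)) * (4 * a^3 - 6 * a^2 + 3 * a)"
    unfolding Fc_def[abs_def]
    by (rule derivative_eq_intros refl | simp)+
  then show ?thesis by (rule DERIV_imp_deriv)
qed

lemma deriv_Fe: "deriv (Fe eta) a = - (1 / (4 * eta^2)) * a"
proof -
  have "DERIV (Fe eta) a :> - (1 / (4 * eta^2)) * a"
    unfolding Fe_def[abs_def]
    by (rule derivative_eq_intros refl | simp)+
  then show ?thesis by (rule DERIV_imp_deriv)
qed

lemma F_nodal:
  assumes eta: "eta > 0"
  shows "F eta a - F eta b \<le> (deriv (Fc eta) a + deriv (Fe eta) b) * (a - b)"
proof -
  define c where "c = 1 / (4 * eta^2)"
  have c: "c > 0" using eta by (simp add: c_def)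
  have key: "a^2 * (a - 1)^2 - b^2 * (b - 1)^2 \<le> ((4 * a^3 - 6 * a^2 + 3 * a) - b) * (a - b)"
  proof -
    have "((4 * a^3 - 6 * a^2 + 3 * a) - b) * (a - b) - (a^2 * (a - 1)^2 - b^2 * (b - 1)^2)
       = (a - b)^2 * ((b + a - 1)^2 + 2 * (a - 1/2)^2 + 1/2)"
      by (simp add: field_simps power2_eq_square power3_eq_cube)
    moreover have "(a - b)^2 * ((b + a - 1)^2 + 2 * (a - 1/2)^2 + 1/2) \<ge> 0" by simp
    ultimately show ?thesis by linarith
  qed
  have "F eta a - F eta b = c * (a^2 * (a - 1)^2 - b^2 * (b - 1)^2)"
    by (simp add: F_def c_def algebra_simps)
  also have "\<dots> \<le> c * (((4 * a^3 - 6 * a^2 + 3 * a) - b) * (a - b))"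
    using key c by (simp add: mult_left_mono)
  also have "\<dots> = (deriv (Fc eta) a + deriv (Fe eta) b) * (a - b)"
    unfolding deriv_Fc deriv_Fe c_def[symmetric] by (simp add: algebra_simps)
  finally show ?thesis .
qed


section \<open>Barycentric coordinates\<close>

definition bary :: "'d::finite elem \<Rightarrow> 'd \<Rightarrow> real^'d \<Rightarrow> real" where
  "bary I i x = (x - fst I) $ i / (snd I $ i)"

definition bary0 :: "'d::finite elem \<Rightarrow> real^'d \<Rightarrow> real" where
  "bary0 I x = 1 - (\<Sum>i\<in>UNIV. bary I i x)"

lemma interp_bary:
  "interp_elem I w x = bary0 I x * w (fst I) + (\<Sum>i\<in>UNIV. bary I i x * w (vtx I i))"
proof -
  have "interp_elem I w x = w (fst I) + (\<Sum>i\<in>UNIV. (w (vtx I i) - w (fst I)) * bary I i x)"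
    by (simp add: interp_elem_def bary_def)
  also have "\<dots> = bary0 I x * w (fst I) + (\<Sum>i\<in>UNIV. bary I i x * w (vtx I i))"
    by (simp add: bary0_def algebra_simps sum_subtractf sum_distrib_left sum_distrib_right)
  finally show ?thesis .
qed

lemma bary_affine:
  "u + v = 1 \<Longrightarrow> bary I i (u *\<^sub>R x + v *\<^sub>R y) = u * bary I i x + v * bary I i y"
proof -
  assume uv: "u + v = 1"
  have "(u *\<^sub>R x + v *\<^sub>R y - fst I) $ i = u * (x - fst I) $ i + v * (y - fst I) $ i"
    using uv by (simp add: algebra_simps) (metis add_diff_cancel_left' distrib_right mult_1 uv)
  then show ?thesis unfolding bary_def by (simp add: add_divide_distrib)
qed

lemma bary0_affine:
  "u + v = 1 \<Longrightarrow> bary0 I (u *\<^sub>R x + v *\<^sub>R y) = u * bary0 I x + v * bary0 I y"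
  unfolding bary0_def using bary_affine[of u v I]
  by (simp add: sum.distrib sum_distrib_left algebra_simps)

lemma convex_level:
  assumes aff: "\<And>u v x y. u + v = 1 \<Longrightarrow> f (u *\<^sub>R x + v *\<^sub>R y) = u * f x + v * f y"
  shows "convex {x. 0 \<le> f x}" "convex {x. f x = 0}"
  unfolding convex_def using aff by auto

lemma vtx_minus: "(vtx I i - fst I) $ j = (if j = i then snd I $ i else 0)"
  by (simp add: vtx_def axis_def)

lemma bary_fst: "bary I j (fst I) = 0"
  by (simp add: bary_def)

lemma bary_vtx: "snd I $ j \<noteq> 0 \<Longrightarrow> bary I j (vtx I i) = (if j = i then 1 else 0)"
  unfolding bary_def by (subst vtx_minus) auto

lemma bary0_fst: "bary0 I (fst I) = 1"
  by (simp add: bary0_def bary_fst)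

lemma bary0_vtx: "\<forall>j. snd I $ j \<noteq> 0 \<Longrightarrow> bary0 I (vtx I i) = 0"
  by (simp add: bary0_def bary_vtx)

lemma elem_set_sub:
  assumes "\<forall>x\<in>verts I. P x" "convex {x. P x}"
  shows "\<forall>x\<in>elem_set I. P x"
proof -
  have "convex hull verts I \<subseteq> {x. P x}"
    by (rule hull_minimal) (use assms in auto)
  then show ?thesis unfolding elem_set_def by auto
qed

lemma bary_nonneg:
  assumes nd: "\<forall>j. snd I $ j \<noteq> 0" and x: "x \<in> elem_set I"
  shows "bary I i x \<ge> 0" "bary0 I x \<ge> 0"
proof -
  have "\<forall>x\<in>elem_set I. 0 \<le> bary I i x"
    by (rule elem_set_sub) (use nd in \<open>auto simp: verts_def bary_fst bary_vtx intro: convex_level bary_affine\<close>)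
  then show "bary I i x \<ge> 0" using x by auto
  have "\<forall>x\<in>elem_set I. 0 \<le> bary0 I x"
    by (rule elem_set_sub) (use nd in \<open>auto simp: verts_def bary0_fst bary0_vtx intro: convex_level bary0_affine\<close>)
  then show "bary0 I x \<ge> 0" using x by auto
qed

lemma interp_mono:
  assumes nd: "\<forall>j. snd I $ j \<noteq> 0" and x: "x \<in> elem_set I"
    and le: "\<forall>v\<in>verts I. w v \<le> w' v"
  shows "interp_elem I w x \<le> interp_elem I w' x"
proof -
  have "bary0 I x * w (fst I) \<le> bary0 I x * w' (fst I)"
    using le bary_nonneg[OF nd x] by (intro mult_left_mono) (auto simp: verts_def)
  moreover have "(\<Sum>i\<in>UNIV. bary I i x * w (vtx I i)) \<le> (\<Sum>i\<in>UNIV. bary I i x * w' (vtx I i))"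
    using le bary_nonneg[OF nd x] by (intro sum_mono mult_left_mono) (auto simp: verts_def)
  ultimately show ?thesis unfolding interp_bary by linarith
qed

lemma interp_diff: "interp_elem I (\<lambda>y. w y - w' y) x = interp_elem I w x - interp_elem I w' x"
  unfolding interp_bary by (simp add: algebra_simps sum_subtractf)

lemma verts_sub: "verts I \<subseteq> elem_set I"
  unfolding elem_set_def by (rule hull_subset)

lemma interp_affine:
  assumes nd: "\<forall>j. snd I $ j \<noteq> 0" and f: "\<forall>y\<in>elem_set I. f y = a + b \<bullet> y"
    and x: "x \<in> elem_set I"
  shows "interp_elem I f x = f x"
proof -
  have f0: "f (fst I) = a + b \<bullet> fst I" using f verts_sub[of I] by (auto simp: verts_def)
  have fi: "f (vtx I i) - f (fst I) = snd I $ i * b $ i" for i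
  proof -
    have "f (vtx I i) = a + b \<bullet> vtx I i" using f verts_sub[of I] by (auto simp: verts_def)
    then show ?thesis using f0 by (simp add: vtx_def inner_add_right inner_axis inner_commute)
  qed
  have "interp_elem I f x = f (fst I) + (\<Sum>i\<in>UNIV. b $ i * (x - fst I) $ i)"
    unfolding interp_elem_def fi using nd by (intro arg_cong2[where f="(+)"] refl sum.cong) auto
  also have "\<dots> = f (fst I) + b \<bullet> (x - fst I)" by (simp add: inner_vec_def)
  also have "\<dots> = f x" using f0 f x by (simp add: inner_diff_right)
  finally show ?thesis .
qed

lemma interp_vertex:
  assumes nd: "\<forall>j. snd I $ j \<noteq> 0" and v: "v \<in> verts I"
  shows "interp_elem I w v = w v"
proof (cases "v = fst I")
  case True then show ?thesis by (simp add: interp_bary bary0_fst bary_fst)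
next
  case False
  then obtain m where m: "v = vtx I m" using v by (auto simp: verts_def)
  have "interp_elem I w v = (\<Sum>i\<in>UNIV. (if m = i then w (vtx I i) else 0))"
  proof -
    have h: "\<And>i. bary I i (vtx I m) * w (vtx I i) = (if m = i then w (vtx I i) else 0)"
      using nd by (auto simp: bary_vtx)
    show ?thesis unfolding interp_bary m bary0_vtx[OF nd] h by simp
  qed
  also have "\<dots> = w v" using m by simp
  finally show ?thesis .
qed


lemma mesh_nd: "struct_mesh T \<Omega> h \<Longrightarrow> I \<in> T \<Longrightarrow> \<forall>j. snd I $ j \<noteq> 0"
  unfolding struct_mesh_def by blast

lemma elem_of_in:
  assumes M: "struct_mesh T \<Omega> h" and x: "x \<in> \<Omega>"
  shows "elem_of T x \<in> T \<and> x \<in> elem_set (elem_of T x)"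
proof -
  have "\<exists>I. I \<in> T \<and> x \<in> elem_set I" using M x unfolding struct_mesh_def by blast
  then show ?thesis unfolding elem_of_def by (rule someI_ex)
qed

lemma elem_sub_Omega: "struct_mesh T \<Omega> h \<Longrightarrow> I \<in> T \<Longrightarrow> elem_set I \<subseteq> \<Omega>"
  unfolding struct_mesh_def by blast

lemma vertex_in_other:
  assumes M: "struct_mesh T \<Omega> h" and I: "I \<in> T" and J: "J \<in> T"
    and v: "v \<in> verts I" and vJ: "v \<in> elem_set J"
  shows "v \<in> verts J"
proof (rule ccontr)
  assume nv: "v \<notin> verts J"
  then have IJ: "I \<noteq> J" using v by auto
  have nd: "\<forall>j. snd I $ j \<noteq> 0" using mesh_nd[OF M I] .
  have "elem_set I \<inter> elem_set J = convex hull (verts I \<inter> verts J)"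
    using M I J IJ unfolding struct_mesh_def by blast
  then have vh: "v \<in> convex hull (verts I \<inter> verts J)" using v vJ verts_sub[of I] by auto
  show False
  proof (cases "v = fst I")
    case True
    have "verts I \<inter> verts J \<subseteq> {x. bary0 I x = 0}"
    proof
      fix u assume u: "u \<in> verts I \<inter> verts J"
      then have "u \<noteq> fst I" using nv True by auto
      then obtain i where "u = vtx I i" using u by (auto simp: verts_def)
      then show "u \<in> {x. bary0 I x = 0}" using nd by (simp add: bary0_vtx)
    qed
    then have "convex hull (verts I \<inter> verts J) \<subseteq> {x. bary0 I x = 0}"
      by (rule hull_minimal) (intro convex_level bary0_affine)
    then show False using vh True bary0_fst[of I] by auto
  next
    case False
    then obtain m where m: "v = vtx I m" using v by (auto simp: verts_def)
    have "verts I \<inter> verts J \<subseteq> {x. bary I m x = 0}"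
    proof
      fix u assume u: "u \<in> verts I \<inter> verts J"
      then have "u \<noteq> v" using nv by auto
      have uI: "u \<in> verts I" using u by auto
      show "u \<in> {x. bary I m x = 0}"
      proof (cases "u = fst I")
        case True then show ?thesis by (simp add: bary_fst)
      next
        case False
        then obtain i where i: "u = vtx I i" using uI by (auto simp: verts_def)
        then have "i \<noteq> m" using \<open>u \<noteq> v\<close> m by auto
        then show ?thesis using i nd by (simp add: bary_vtx)
      qed
    qed
    then have "convex hull (verts I \<inter> verts J) \<subseteq> {x. bary I m x = 0}"
      by (rule hull_minimal) (intro convex_level bary_affine)
    then show False using vh m nd bary_vtx[of I m m] by auto
  qed
qed

lemma Ih_vertex:
  assumes M: "struct_mesh T \<Omega> h" and I: "I \<in> T" and v: "v \<in> verts I"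
  shows "Ih T g v = g v"
proof -
  have vO: "v \<in> \<Omega>" using elem_sub_Omega[OF M I] verts_sub[of I] v by auto
  note J = elem_of_in[OF M vO]
  have "v \<in> verts (elem_of T v)" using vertex_in_other[OF M I _ v] J by blast
  then show ?thesis unfolding Ih_def using interp_vertex mesh_nd[OF M] J by blast
qed

lemma Phi_affine: "f \<in> Phi_h T \<Omega> \<Longrightarrow> I \<in> T \<Longrightarrow> \<exists>a b. \<forall>x\<in>elem_set I. f x = a + b \<bullet> x"
  unfolding Phi_h_def by blast

lemma Ih_Phi:
  assumes M: "struct_mesh T \<Omega> h" and f: "f \<in> Phi_h T \<Omega>" and x: "x \<in> \<Omega>"
  shows "Ih T f x = f x"
proof -
  note J = elem_of_in[OF M x]
  obtain a b where "\<forall>y\<in>elem_set (elem_of T x). f y = a + b \<bullet> y" using Phi_affine[OF f] J by blast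
  then show ?thesis unfolding Ih_def using interp_affine mesh_nd[OF M] J by blast
qed

definition badset :: "'d::finite elem set \<Rightarrow> (real^'d) set" where
  "badset T = (\<Union>I\<in>T. frontier (elem_set I)) \<union> (\<Union>I\<in>T. \<Union>J\<in>T - {I}. elem_set I \<inter> elem_set J)"

lemma convex_elem: "convex (elem_set I)"
  unfolding elem_set_def by simp

lemma compact_elem: "compact (elem_set I)"
  unfolding elem_set_def verts_def by (rule finite_imp_compact_convex_hull) simp

lemma negl_inter:
  assumes M: "struct_mesh T \<Omega> h" and I: "I \<in> T" and J: "J \<in> T" and IJ: "I \<noteq> J"
  shows "negligible (elem_set I \<inter> elem_set J)"
proof -
  have eq: "elem_set I \<inter> elem_set J = convex hull (verts I \<inter> verts J)"
    and di: "interior (elem_set I) \<inter> interior (elem_set J) = {}"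
    using M I J IJ unfolding struct_mesh_def by blast+
  have "interior (elem_set I \<inter> elem_set J) = {}"
    using di by (simp add: interior_Int)
  then show ?thesis using eq by (simp add: negligible_convex_interior)
qed

lemma negl_badset:
  assumes M: "struct_mesh T \<Omega> h"
  shows "negligible (badset T)"
proof -
  have fin: "finite T" using M unfolding struct_mesh_def by blast
  have "negligible (\<Union>I\<in>T. frontier (elem_set I))"
    using fin by (intro negligible_Union) (auto intro: negligible_convex_frontier convex_elem)
  moreover have "negligible (\<Union>I\<in>T. \<Union>J\<in>T - {I}. elem_set I \<inter> elem_set J)"
  proof (rule negligible_Union)
    show "finite ((\<lambda>I. \<Union>J\<in>T - {I}. elem_set I \<inter> elem_set J) ` T)" using fin by simp
    fix X assume "X \<in> (\<lambda>I. \<Union>J\<in>T - {I}. elem_set I \<inter> elem_set J) ` T"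
    then obtain I where I: "I \<in> T" and X: "X = (\<Union>J\<in>T - {I}. elem_set I \<inter> elem_set J)" by blast
    show "negligible X" unfolding X
    proof (rule negligible_Union)
      show "finite ((\<lambda>J. elem_set I \<inter> elem_set J) ` (T - {I}))" using fin by simp
      fix Y assume "Y \<in> (\<lambda>J. elem_set I \<inter> elem_set J) ` (T - {I})"
      then show "negligible Y" using negl_inter[OF M I] by blast
    qed
  qed
  ultimately show ?thesis unfolding badset_def by (rule negligible_Un)
qed

lemma good_point:
  assumes M: "struct_mesh T \<Omega> h" and I: "I \<in> T" and x: "x \<in> elem_set I" and nb: "x \<notin> badset T"
  shows "elem_of T x = I" "x \<in> interior (elem_set I)"
proof -
  have xO: "x \<in> \<Omega>" using elem_sub_Omega[OF M I] x by auto
  note J = elem_of_in[OF M xO]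
  show "elem_of T x = I"
  proof (rule ccontr)
    assume "elem_of T x \<noteq> I"
    then have "x \<in> badset T" using J I x unfolding badset_def by blast
    then show False using nb by simp
  qed
  have "x \<notin> frontier (elem_set I)" using nb I unfolding badset_def by blast
  moreover have "closure (elem_set I) = elem_set I"
    using compact_elem[of I] by (simp add: compact_imp_closed closure_closed)
  ultimately show "x \<in> interior (elem_set I)" using x unfolding frontier_def by auto
qed

lemma cont_integrable:
  fixes g :: "real^'d::finite \<Rightarrow> real"
  assumes g: "continuous_on UNIV g" and S: "compact S"
  shows "g integrable_on S"
proof -
  obtain a where a: "S \<subseteq> cbox (- a) a" using compact_imp_bounded[OF S] bounded_subset_cbox_symmetric by blast
  have "g absolutely_integrable_on cbox (- a) a"
    by (rule absolutely_integrable_continuous) (rule continuous_on_subset[OF g], simp)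
  then have "g absolutely_integrable_on S"
    by (rule set_integrable_subset) (use a lmeasurable_compact[OF S] in auto)
  then show ?thesis by (rule set_lebesgue_integral_eq_integral(1))
qed

lemma piecewise_integrable:
  assumes M: "struct_mesh T \<Omega> h"
    and pw: "\<And>I. I \<in> T \<Longrightarrow> \<exists>g. continuous_on UNIV g \<and> (\<forall>x\<in>elem_set I - badset T. f x = g x)"
  shows "(f :: real^'d::finite \<Rightarrow> real) integrable_on \<Omega>"
proof -
  have fin: "finite T" and Om: "\<Omega> = \<Union>(elem_set ` T)" using M unfolding struct_mesh_def by blast+
  have each: "f integrable_on elem_set I" if I: "I \<in> T" for I
  proof -
    obtain g where g: "continuous_on UNIV g" "\<forall>x\<in>elem_set I - badset T. f x = g x" using pw[OF I] by blast
    show ?thesis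
      by (rule integrable_spike[OF cont_integrable[OF g(1) compact_elem] negl_badset[OF M]]) (use g in auto)
  qed
  have "(f has_integral (sum (\<lambda>S. integral S f) (elem_set ` T))) (\<Union>(elem_set ` T))"
  proof (rule has_integral_Union)
    show "finite (elem_set ` T)" using fin by simp
    show "\<And>S. S \<in> elem_set ` T \<Longrightarrow> (f has_integral integral S f) S"
      using each by auto
    show "pairwise (\<lambda>S S'. negligible (S \<inter> S')) (elem_set ` T)"
      unfolding pairwise_def using negl_inter[OF M] by auto
  qed
  then show ?thesis unfolding Om by blast
qed

lemma integral_le_ae:
  fixes f g :: "real^'d::finite \<Rightarrow> real"
  assumes f: "f integrable_on S" and g: "g integrable_on S" and N: "negligible N"
    and le: "\<And>x. x \<in> S - N \<Longrightarrow> f x \<le> g x"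
  shows "integral S f \<le> integral S g"
proof -
  let ?f = "\<lambda>x. if x \<in> N then 0 else f x" and ?g = "\<lambda>x. if x \<in> N then 0 else g x"
  have "integral S f = integral S ?f" by (rule integral_spike[OF N]) auto
  moreover have "integral S g = integral S ?g" by (rule integral_spike[OF N]) auto
  moreover have "integral S ?f \<le> integral S ?g"
  proof (rule integral_le)
    show "?f integrable_on S" by (rule integrable_spike[OF f N]) auto
    show "?g integrable_on S" by (rule integrable_spike[OF g N]) auto
  qed (use le in auto)
  ultimately show ?thesis by simp
qed

lemma grad_affine:
  fixes f :: "real^'d::finite \<Rightarrow> real"
  assumes f: "\<forall>y\<in>S. f y = a + b \<bullet> y" and x: "x \<in> interior S"
  shows "grad f x = b"
proof -
  have "((\<lambda>y. a + b \<bullet> y) has_derivative (\<lambda>h. b \<bullet> h)) (at x)"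
    by (rule derivative_eq_intros refl)+ simp
  then have "(f has_derivative (\<lambda>h. b \<bullet> h)) (at x)"
    by (rule has_derivative_transform_within_open[OF _ open_interior x])
       (use f interior_subset in \<open>metis subsetD\<close>)
  then have "frechet_derivative f (at x) = (\<lambda>h. b \<bullet> h)"
    by (simp add: frechet_derivative_at[symmetric])
  then show ?thesis
    unfolding grad_def by (simp add: vec_eq_iff inner_axis)
qed


section \<open>Integrability of discrete quantities\<close>

lemma Phi_integrable:
  assumes M: "struct_mesh T \<Omega> h" and f: "f \<in> Phi_h T \<Omega>"
  shows "f integrable_on \<Omega>"
proof (rule piecewise_integrable[OF M])
  fix I assume I: "I \<in> T"
  obtain a b where ab: "\<forall>x\<in>elem_set I. f x = a + b \<bullet> x" using Phi_affine[OF f I] by blast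
  show "\<exists>g. continuous_on UNIV g \<and> (\<forall>x\<in>elem_set I - badset T. f x = g x)"
    by (rule exI[of _ "\<lambda>x. a + b \<bullet> x"]) (use ab in \<open>auto intro!: continuous_intros\<close>)
qed

lemma Ih_integrable:
  assumes M: "struct_mesh T \<Omega> h"
  shows "Ih T w integrable_on \<Omega>"
proof (rule piecewise_integrable[OF M])
  fix I assume I: "I \<in> T"
  have "continuous_on UNIV (interp_elem I w)"
    unfolding interp_elem_def using mesh_nd[OF M I] by (auto intro!: continuous_intros)
  moreover have "\<forall>x\<in>elem_set I - badset T. Ih T w x = interp_elem I w x"
    using good_point[OF M I] by (auto simp: Ih_def)
  ultimately show "\<exists>g. continuous_on UNIV g \<and> (\<forall>x\<in>elem_set I - badset T. Ih T w x = g x)"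
    by blast
qed

lemma grad_good:
  assumes M: "struct_mesh T \<Omega> h" and I: "I \<in> T" and x: "x \<in> elem_set I - badset T"
    and ab: "\<forall>y\<in>elem_set I. f y = a + b \<bullet> y"
  shows "grad f x = b"
  using grad_affine[OF ab] good_point(2)[OF M I] x by blast

lemma grad_integrable:
  assumes M: "struct_mesh T \<Omega> h" and f1: "f1 \<in> Phi_h T \<Omega>" and f2: "f2 \<in> Phi_h T \<Omega>"
  shows "(\<lambda>x. H (grad f1 x) (grad f2 x) :: real) integrable_on \<Omega>"
proof (rule piecewise_integrable[OF M])
  fix I assume I: "I \<in> T"
  obtain a1 b1 where ab1: "\<forall>x\<in>elem_set I. f1 x = a1 + b1 \<bullet> x" using Phi_affine[OF f1 I] by blast
  obtain a2 b2 where ab2: "\<forall>x\<in>elem_set I. f2 x = a2 + b2 \<bullet> x" using Phi_affine[OF f2 I] by blast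
  show "\<exists>g. continuous_on UNIV g \<and> (\<forall>x\<in>elem_set I - badset T. H (grad f1 x) (grad f2 x) = g x)"
    by (rule exI[of _ "\<lambda>x. H b1 b2"]) (use grad_good[OF M I _ ab1] grad_good[OF M I _ ab2] in auto)
qed

theorem lemma4:
  fixes T :: "'d::finite elem set" and \<Omega> :: "(real^'d) set"
    and h \<eta> \<epsilon> \<Delta>t :: real and k :: nat
    and \<phi>n \<phi>1 \<mu>1 :: "real^'d \<Rightarrow> real"
  assumes dim: "CARD('d) \<le> 3"
    and mesh: "struct_mesh T \<Omega> h"
    and eta: "\<eta> > 0"
    and eps: "0 < \<epsilon>" "\<epsilon> < 1/2"
    and dt: "\<Delta>t > 0"
    and k: "k \<ge> 1"
    and phin: "\<phi>n \<in> Phi_h T \<Omega>"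
    and phi1: "\<phi>1 \<in> Phi_h T \<Omega>"
    and mu1: "\<mu>1 \<in> M_h T \<Omega> k"
    and eq1: "\<forall>\<mu>b \<in> M_h T \<Omega> k.
        (1 / \<Delta>t) * lumped T \<Omega> (\<lambda>x. \<phi>1 x - \<phi>n x) \<mu>b
        + integral \<Omega> (\<lambda>x. (MG T \<epsilon> \<phi>1 x *v grad \<mu>1 x) \<bullet> grad \<mu>b x) = 0"
    and eq2: "\<forall>\<phi>b \<in> Phi_h T \<Omega>.
        integral \<Omega> (\<lambda>x. grad \<phi>1 x \<bullet> grad \<phi>b x)
        + lumped T \<Omega> (\<lambda>x. Ih T (\<lambda>y. deriv (Fc \<eta>) (\<phi>1 y)) x
                          + Ih T (\<lambda>y. deriv (Fe \<eta>) (\<phi>n y)) x) \<phi>b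
        = lumped T \<Omega> \<mu>1 \<phi>b"
  shows "integral \<Omega> \<phi>1 = integral \<Omega> \<phi>n \<and>
         (Eh T \<Omega> \<eta> \<phi>1 - Eh T \<Omega> \<eta> \<phi>n) / \<Delta>t
         + integral \<Omega> (\<lambda>x. (norm (sqrtMG T \<epsilon> \<phi>1 x *v grad \<mu>1 x))^2) \<le> 0"
  proof -
  define D where "D = (\<lambda>x. \<phi>1 x - \<phi>n x)"
  define P where "P = (\<lambda>x. Ih T (\<lambda>y. deriv (Fc \<eta>) (\<phi>1 y)) x + Ih T (\<lambda>y. deriv (Fe \<eta>) (\<phi>n y)) x)"
  have Om: "\<Omega> = \<Union>(elem_set ` T)" using mesh unfolding struct_mesh_def by blast
  have D_aff: "\<exists>a b. \<forall>x\<in>elem_set I. D x = a + b \<bullet> x" if I: "I \<in> T" for I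
  proof -
    obtain a1 b1 where 1: "\<forall>x\<in>elem_set I. \<phi>1 x = a1 + b1 \<bullet> x" using Phi_affine[OF phi1 I] by blast
    obtain a2 b2 where 2: "\<forall>x\<in>elem_set I. \<phi>n x = a2 + b2 \<bullet> x" using Phi_affine[OF phin I] by blast
    show ?thesis
      by (rule exI[of _ "a1 - a2"], rule exI[of _ "b1 - b2"]) (use 1 2 in \<open>auto simp: D_def inner_diff_left\<close>)
  qed
  have DPhi: "D \<in> Phi_h T \<Omega>"
    using phi1 phin D_aff unfolding Phi_h_def D_def by (auto intro!: continuous_on_diff)
  have one: "(\<lambda>x. 1::real) \<in> M_h T \<Omega> k"
    unfolding M_h_def poly_deg_le_def
    by (auto intro!: exI[of _ "{\<lambda>_. 0}"] exI[of _ "\<lambda>_. 1::real"])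
  have grad1: "grad (\<lambda>x. 1::real) x = 0" for x
    by (rule grad_affine[where S=UNIV and a=1]) auto
  have "lumped T \<Omega> D (\<lambda>x. 1) = 0"
    using eq1[rule_format, OF one] dt by (simp add: grad1 D_def)
  then have "integral \<Omega> (Ih T D) = 0" unfolding lumped_def by simp
  moreover have "integral \<Omega> (Ih T D) = integral \<Omega> D"
    by (rule integral_cong) (rule Ih_Phi[OF mesh DPhi])
  moreover have "integral \<Omega> D = integral \<Omega> \<phi>1 - integral \<Omega> \<phi>n"
    unfolding D_def by (rule integral_diff[OF Phi_integrable[OF mesh phi1] Phi_integrable[OF mesh phin]])
  ultimately have mass: "integral \<Omega> \<phi>1 = integral \<Omega> \<phi>n" by simp
  have gradA: "integral \<Omega> (\<lambda>x. (1/2) * (norm (grad \<phi>1 x))^2) - integral \<Omega> (\<lambda>x. (1/2) * (norm (grad \<phi>n x))^2)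
      \<le> integral \<Omega> (\<lambda>x. grad \<phi>1 x \<bullet> grad D x)"
  proof -
    have i1: "(\<lambda>x. (1/2) * (norm (grad \<phi>1 x))^2) integrable_on \<Omega>"
      using grad_integrable[OF mesh phi1 phi1, of "\<lambda>u v. (1/2) * (norm u)^2"] by simp
    have i2: "(\<lambda>x. (1/2) * (norm (grad \<phi>n x))^2) integrable_on \<Omega>"
      using grad_integrable[OF mesh phin phin, of "\<lambda>u v. (1/2) * (norm u)^2"] by simp
    have i3: "(\<lambda>x. grad \<phi>1 x \<bullet> grad D x) integrable_on \<Omega>"
      using grad_integrable[OF mesh phi1 DPhi, of "\<lambda>u v. u \<bullet> v"] by simp
    have "integral \<Omega> (\<lambda>x. (1/2) * (norm (grad \<phi>1 x))^2 - (1/2) * (norm (grad \<phi>n x))^2)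
        \<le> integral \<Omega> (\<lambda>x. grad \<phi>1 x \<bullet> grad D x)"
    proof (rule integral_le_ae[OF integrable_diff[OF i1 i2] i3 negl_badset[OF mesh]])
      fix x assume x: "x \<in> \<Omega> - badset T"
      then obtain I where I: "I \<in> T" and xI: "x \<in> elem_set I - badset T" using Om by blast
      obtain a1 b1 where 1: "\<forall>x\<in>elem_set I. \<phi>1 x = a1 + b1 \<bullet> x" using Phi_affine[OF phi1 I] by blast
      obtain a2 b2 where 2: "\<forall>x\<in>elem_set I. \<phi>n x = a2 + b2 \<bullet> x" using Phi_affine[OF phin I] by blast
      have 3: "\<forall>x\<in>elem_set I. D x = (a1 - a2) + (b1 - b2) \<bullet> x"
        using 1 2 by (auto simp: D_def inner_diff_left)
      have g1: "grad \<phi>1 x = b1" by (rule grad_good[OF mesh I xI 1])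
      have g2: "grad \<phi>n x = b2" by (rule grad_good[OF mesh I xI 2])
      have g3: "grad D x = b1 - b2" by (rule grad_good[OF mesh I xI 3])
      have "0 \<le> (b1 - b2) \<bullet> (b1 - b2)" by simp
      then show "(1/2) * (norm (grad \<phi>1 x))^2 - (1/2) * (norm (grad \<phi>n x))^2 \<le> grad \<phi>1 x \<bullet> grad D x"
        unfolding g1 g2 g3 power2_norm_eq_inner
        by (simp add: inner_diff_left inner_diff_right inner_commute algebra_simps)
    qed
    then show ?thesis using integral_diff[OF i1 i2] by simp
  qed
  have potB: "integral \<Omega> (Ih T (\<lambda>x. F \<eta> (\<phi>1 x))) - integral \<Omega> (Ih T (\<lambda>x. F \<eta> (\<phi>n x)))
      \<le> integral \<Omega> (Ih T (\<lambda>x. P x * D x))"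
  proof -
    have "integral \<Omega> (\<lambda>x. Ih T (\<lambda>x. F \<eta> (\<phi>1 x)) x - Ih T (\<lambda>x. F \<eta> (\<phi>n x)) x)
        \<le> integral \<Omega> (Ih T (\<lambda>x. P x * D x))"
    proof (rule integral_le[OF integrable_diff[OF Ih_integrable[OF mesh] Ih_integrable[OF mesh]] Ih_integrable[OF mesh]])
      fix x assume x: "x \<in> \<Omega>"
      define J where "J = elem_of T x"
      have J: "J \<in> T" "x \<in> elem_set J" using elem_of_in[OF mesh x] by (auto simp: J_def)
      have "Ih T (\<lambda>x. F \<eta> (\<phi>1 x)) x - Ih T (\<lambda>x. F \<eta> (\<phi>n x)) x
          = interp_elem J (\<lambda>y. F \<eta> (\<phi>1 y) - F \<eta> (\<phi>n y)) x"
        unfolding Ih_def J_def[symmetric] interp_diff ..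
      also have "\<dots> \<le> interp_elem J (\<lambda>y. P y * D y) x"
      proof (rule interp_mono[OF mesh_nd[OF mesh J(1)] J(2)])
        show "\<forall>v\<in>verts J. F \<eta> (\<phi>1 v) - F \<eta> (\<phi>n v) \<le> P v * D v"
        proof
          fix v assume v: "v \<in> verts J"
          have "P v = deriv (Fc \<eta>) (\<phi>1 v) + deriv (Fe \<eta>) (\<phi>n v)"
            unfolding P_def by (simp add: Ih_vertex[OF mesh J(1) v])
          then show "F \<eta> (\<phi>1 v) - F \<eta> (\<phi>n v) \<le> P v * D v"
            using F_nodal[OF eta, of "\<phi>1 v" "\<phi>n v"] by (simp add: D_def)
        qed
      qed
      also have "\<dots> = Ih T (\<lambda>x. P x * D x) x" unfolding Ih_def J_def ..
      finally show "Ih T (\<lambda>x. F \<eta> (\<phi>1 x)) x - Ih T (\<lambda>x. F \<eta> (\<phi>n x)) x \<le> Ih T (\<lambda>x. P x * D x) x" .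
    qed
    then show ?thesis using integral_diff[OF Ih_integrable[OF mesh] Ih_integrable[OF mesh]] by simp
  qed
  define L where "L = lumped T \<Omega> D \<mu>1"
  define Q where "Q = integral \<Omega> (\<lambda>x. (MG T \<epsilon> \<phi>1 x *v grad \<mu>1 x) \<bullet> grad \<mu>1 x)"
  have e1: "(1 / \<Delta>t) * L + Q = 0"
    using eq1[rule_format, OF mu1] unfolding L_def Q_def D_def .
  have e2: "integral \<Omega> (\<lambda>x. grad \<phi>1 x \<bullet> grad D x) + lumped T \<Omega> P D = lumped T \<Omega> \<mu>1 D"
    using eq2[rule_format, OF DPhi] unfolding P_def .
  have sym: "lumped T \<Omega> \<mu>1 D = L"
    unfolding L_def lumped_def by (simp add: mult.commute)
  have Qeq: "integral \<Omega> (\<lambda>x. (norm (sqrtMG T \<epsilon> \<phi>1 x *v grad \<mu>1 x))^2) = Q"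
    unfolding Q_def by (simp only: MG_quad[OF eps])
  have E: "Eh T \<Omega> \<eta> \<phi>1 - Eh T \<Omega> \<eta> \<phi>n \<le> L"
    using gradA potB e2 sym unfolding Eh_def lumped_def by linarith
  have "(Eh T \<Omega> \<eta> \<phi>1 - Eh T \<Omega> \<eta> \<phi>n) / \<Delta>t \<le> L / \<Delta>t"
    using E dt by (simp add: divide_right_mono)
  moreover have "Q = - (L / \<Delta>t)" using e1 by simp
  ultimately have "(Eh T \<Omega> \<eta> \<phi>1 - Eh T \<Omega> \<eta> \<phi>n) / \<Delta>t + Q \<le> 0" by linarith
  then show ?thesis using mass Qeq by simp
qed

end
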